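(* Let $G$ be a compact connected Lie group with Lie algebra $\mathfrak{g}$, embedded as a subgroup of some $U_n$. For $\xi\in\mathfrak{g}$ let $\eta_\xi:\mathbb{R}\to G$ be $\eta_\xi(t)=\exp(t\xi)$. If $\xi_1,\xi_2\in\mathfrak{g}$ satisfy $\exp(\xi_1)=\exp(\xi_2)$, then the path $t\mapsto \eta_{-\xi_1}(t)\eta_{\xi_2}(t)$ is a polynomial loop in $G$.
   Context: Via $G\subseteq U_n\subseteq M_n(\mathbb{C})$, a loop $\gamma:S^1=\mathbb{R}/\mathbb{Z}\to G$ (equivalently a $1$-periodic path $\mathbb{R}\to G$) is a polynomial loop if its Fourier series in $M_n(\mathbb{C})$ is a finite Laurent polynomial $\sum_{k=-N}^N \gamma_k z^k$, where $z=e^{2\pi i t}$. The group of such loops is $L_{\mathrm{pol}}G$; this does not depend on the embedding. *)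

theory Defs
  imports "HOL-Analysis.Analysis"
begin

definition mat_pow :: "complex^'n^'n \<Rightarrow> nat \<Rightarrow> complex^'n^'n" where
  "mat_pow A k = (((**) A) ^^ k) (mat 1)"

definition mexp :: "complex^'n^'n \<Rightarrow> complex^'n^'n" where
  "mexp A = (\<Sum>k. (1 / fact k) *\<^sub>R mat_pow A k)"

definition conj_transpose :: "complex^'n^'n \<Rightarrow> complex^'n^'n" where
  "conj_transpose A = (\<chi> i j. cnj (A $ j $ i))"

definition unitary_group :: "(complex^'n^'n) set" where
  "unitary_group = {U. U ** conj_transpose U = mat 1 \<and> conj_transpose U ** U = mat 1}"

text \<open>A compact connected Lie group embedded as a subgroup of U_n: a compact (hence closed,
  hence Lie by Cartan) connected subgroup of the unitary group.\<close>
definition compact_connected_matrix_group :: "(complex^'n^'n) set \<Rightarrow> bool" where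
  "compact_connected_matrix_group G \<longleftrightarrow>
     G \<subseteq> unitary_group \<and> mat 1 \<in> G \<and>
     (\<forall>A\<in>G. \<forall>B\<in>G. A ** B \<in> G) \<and> (\<forall>A\<in>G. conj_transpose A \<in> G) \<and>
     compact G \<and> connected G"

definition lie_algebra :: "(complex^'n^'n) set \<Rightarrow> (complex^'n^'n) set" where
  "lie_algebra G = {\<xi>. \<forall>t::real. mexp (t *\<^sub>R \<xi>) \<in> G}"

definition eta :: "complex^'n^'n \<Rightarrow> real \<Rightarrow> complex^'n^'n" where
  "eta \<xi> t = mexp (t *\<^sub>R \<xi>)"

text \<open>Polynomial loop in G: a path R -> G that is a finite Laurent polynomial in
  z = exp(2 pi i t) (hence automatically 1-periodic).\<close>
definition polynomial_loop :: "(complex^'n^'n) set \<Rightarrow> (real \<Rightarrow> complex^'n^'n) \<Rightarrow> bool" where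
  "polynomial_loop G \<gamma> \<longleftrightarrow> (\<forall>t. \<gamma> t \<in> G) \<and>
     (\<exists>(N::nat) (c :: int \<Rightarrow> complex^'n^'n). \<forall>t i j.
        \<gamma> t $ i $ j = (\<Sum>k\<in>{-int N..int N}. c k $ i $ j * exp (2 * pi * \<i> * of_int k * of_real t)))"

end

theory Submission
  imports Defs "Jordan_Normal_Form.Jordan_Normal_Form_Uniqueness" "Jordan_Normal_Form.Jordan_Normal_Form_Existence"
begin

no_notation Matrix.vec_index (infixl \<open>$\<close> 100)


lemma min2_min1: "sum_list (map (min (2::nat)) xs) = sum_list (map (min 1) xs) \<Longrightarrow> x \<in> set xs \<Longrightarrow> x \<le> 1"
proof (induct xs)
  case (Cons a xs)
  have le: "\<And>ys. sum_list (map (min (1::nat)) ys) \<le> sum_list (map (min 2) ys)"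
    by (intro sum_list_mono) auto
  from Cons.prems(1) le[of xs] have "min 2 a \<le> min 1 a" by simp
  hence a: "a \<le> 1" by simp
  hence "min 2 a = min (1::nat) a" by auto
  with Cons.prems(1) have "sum_list (map (min (2::nat)) xs) = sum_list (map (min 1) xs)"
    by simp
  with Cons a show ?case by auto
qed simp

lemma jordan_matrix_diag:
  assumes "\<forall>p \<in> set n_as. fst p \<le> 1"
  and "i < sum_list (map fst n_as)" "j < sum_list (map fst n_as)" "i \<noteq> j"
  shows "jordan_matrix n_as $$ (i,j) = 0"
  using assms
proof (induct n_as arbitrary: i j)
  case Nil then show ?case by simp
next
  case (Cons p n_as)
  obtain k a where p: "p = (k,a)" by force
  have k: "k \<le> 1" using Cons.prems p by auto
  show ?case
    unfolding p jordan_matrix_Cons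
    using Cons.prems Cons.hyps k p
    by (auto simp: index_mat_four_block)
qed

lemma jnf_diag:
  fixes A :: "complex mat"
  assumes A: "A \<in> carrier_mat n n"
  and H: "\<And>ev v. v \<in> carrier_vec n \<Longrightarrow> char_matrix A ev *\<^sub>v (char_matrix A ev *\<^sub>v v) = 0\<^sub>v n
            \<Longrightarrow> char_matrix A ev *\<^sub>v v = 0\<^sub>v n"
  shows "\<exists>P Q D. P \<in> carrier_mat n n \<and> Q \<in> carrier_mat n n \<and> D \<in> carrier_mat n n \<and>
     P * Q = 1\<^sub>m n \<and> Q * P = 1\<^sub>m n \<and> A = P * D * Q \<and> (\<forall>i<n. \<forall>j<n. i \<noteq> j \<longrightarrow> D $$ (i,j) = 0)"
proof -
  from char_poly_factorized[OF A] obtain as where "char_poly A = (\<Prod>a\<leftarrow>as. [:- a, 1:])" by auto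
  from jordan_nf_exists[OF A this] obtain n_as where jnf: "jordan_nf A n_as" ..
  let ?J = "jordan_matrix n_as"
  from jnf have sim: "similar_mat A ?J" unfolding jordan_nf_def by (rule conjunct2)
  from sim obtain P Q where wit: "similar_mat_wit A ?J P Q"
    unfolding similar_mat_def by (elim exE)
  note W = similar_mat_witD2[OF A wit]
  have Jdim: "sum_list (map fst n_as) = n" using W(5)
    by (metis carrier_matD(1) jordan_matrix_dim(1))
  have sizes: "\<forall>p \<in> set n_as. fst p \<le> 1"
  proof
    fix p assume p: "p \<in> set n_as"
    obtain k ev where pk: "p = (k,ev)" by force
    let ?C = "char_matrix A ev"
    have C: "?C \<in> carrier_mat n n" using A by simp
    have ker: "mat_kernel (?C ^\<^sub>m 2) = mat_kernel (?C ^\<^sub>m 1)"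
    proof -
      have e2: "?C ^\<^sub>m 2 = ?C * ?C" using C by (simp add: numeral_2_eq_2)
      have e1: "?C ^\<^sub>m 1 = ?C" using C by simp
      have z: "?C *\<^sub>v 0\<^sub>v n = 0\<^sub>v n" using C by (intro eq_vecI) auto
      show ?thesis unfolding e2 e1
      proof (rule Set.set_eqI)
        fix v
        show "v \<in> mat_kernel (?C * ?C) \<longleftrightarrow> v \<in> mat_kernel ?C"
        proof
          assume "v \<in> mat_kernel (?C * ?C)"
          hence v: "v \<in> carrier_vec n" "(?C * ?C) *\<^sub>v v = 0\<^sub>v n" unfolding mat_kernel_def using C by auto
          hence "?C *\<^sub>v (?C *\<^sub>v v) = 0\<^sub>v n" using C by simp
          hence "?C *\<^sub>v v = 0\<^sub>v n" using H v(1) by blast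
          thus "v \<in> mat_kernel ?C" unfolding mat_kernel_def using C v by auto
        next
          assume "v \<in> mat_kernel ?C"
          hence v: "v \<in> carrier_vec n" "?C *\<^sub>v v = 0\<^sub>v n" unfolding mat_kernel_def using C by auto
          hence "(?C * ?C) *\<^sub>v v = 0\<^sub>v n" using C z by simp
          thus "v \<in> mat_kernel (?C * ?C)" unfolding mat_kernel_def using C v by auto
        qed
      qed
    qed
    have "dim_gen_eigenspace A ev 2 = dim_gen_eigenspace A ev 1"
      unfolding dim_gen_eigenspace_def kernel_dim_def using ker C
      by simp
    hence "sum_list (map (min 2) (map fst [(n, e)\<leftarrow>n_as . e = ev])) = sum_list (map (min 1) (map fst [(n, e)\<leftarrow>n_as . e = ev]))"
      unfolding dim_gen_eigenspace[OF jnf] by simp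
    moreover have "k \<in> set (map fst [(n, e)\<leftarrow>n_as . e = ev])" using p pk by force
    ultimately have "k \<le> 1" by (rule min2_min1)
    thus "fst p \<le> 1" using pk by simp
  qed
  show ?thesis
    apply (rule exI[of _ P], rule exI[of _ Q], rule exI[of _ ?J])
    using W jordan_matrix_diag[OF sizes] Jdim by auto
qed



definition ix :: "nat \<Rightarrow> 'n::finite" where
  "ix = (SOME h. bij_betw h {0..<CARD('n)} (UNIV::'n set))"
definition jx :: "'n::finite \<Rightarrow> nat" where
  "jx = inv_into {0..<CARD('n)} ix"

lemma bij_ix: "bij_betw (ix :: nat \<Rightarrow> 'n::finite) {0..<CARD('n)} UNIV"
proof -
  have "\<exists>h. bij_betw h {0..<card (UNIV::'n set)} (UNIV::'n set)"
    by (rule ex_bij_betw_nat_finite) simp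
  then show ?thesis unfolding ix_def by (rule someI_ex)
qed

lemma jx_lt[simp]: "jx (a::'n::finite) < CARD('n)"
  using bij_ix[where 'n='n] unfolding jx_def
  by (metis atLeastLessThan_iff bij_betw_def inv_into_into UNIV_I)
lemma ix_jx[simp]: "ix (jx (a::'n::finite)) = a"
  using bij_ix[where 'n='n] unfolding jx_def
  by (simp add: bij_betw_def f_inv_into_f)
lemma jx_ix[simp]: "i < CARD('n::finite) \<Longrightarrow> jx (ix i :: 'n) = i"
  using bij_ix[where 'n='n] unfolding jx_def
  by (simp add: bij_betw_def inv_into_f_f)
lemma jx_inj[simp]: "(jx (a::'n::finite) = jx b) = (a = b)"
  by (metis ix_jx)
lemma ix_inj: "i < CARD('n::finite) \<Longrightarrow> j < CARD('n) \<Longrightarrow> (ix i :: 'n) = ix j \<Longrightarrow> i = j"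
  by (metis jx_ix)

definition to_m :: "complex^'n^'n \<Rightarrow> complex Matrix.mat" where
  "to_m X = Matrix.mat CARD('n) CARD('n) (\<lambda>(i,j). X $ ix i $ ix j)"
definition from_m :: "complex Matrix.mat \<Rightarrow> complex^'n^'n" where
  "from_m M = (\<chi> a b. M $$ (jx a, jx b))"
definition to_v :: "complex^'n \<Rightarrow> complex Matrix.vec" where
  "to_v x = Matrix.vec CARD('n) (\<lambda>i. x $ ix i)"
definition from_v :: "complex Matrix.vec \<Rightarrow> complex^'n::finite" where
  "from_v v = (\<chi> a. Matrix.vec_index v (jx a))"

lemma to_m_carrier[simp]: "to_m (X::complex^'n^'n) \<in> carrier_mat CARD('n) CARD('n)"
  unfolding to_m_def by simp
lemma to_v_carrier[simp]: "to_v (x::complex^'n) \<in> carrier_vec CARD('n)"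
  unfolding to_v_def by simp

lemma sum_ix: "(\<Sum>a\<in>UNIV. f a) = (\<Sum>k\<in>{0..<CARD('n::finite)}. f (ix k :: 'n))"
  using sum.reindex_bij_betw[OF bij_ix, of f] by simp

lemma to_m_mult: "to_m (X ** Y) = to_m X * to_m (Y :: complex^'n^'n)"
  by (rule eq_matI) (auto simp: to_m_def matrix_matrix_mult_def scalar_prod_def row_def col_def sum_ix)

lemma to_m_mv: "to_m X *\<^sub>v to_v x = to_v (X *v (x :: complex^'n))"
  by (rule eq_vecI) (auto simp: to_m_def to_v_def matrix_vector_mult_def scalar_prod_def row_def sum_ix)

lemma from_to_m[simp]: "from_m (to_m X) = (X :: complex^'n^'n)"
  by (simp add: from_m_def to_m_def Finite_Cartesian_Product.vec_eq_iff)
lemma to_from_m[simp]: "M \<in> carrier_mat CARD('n) CARD('n) \<Longrightarrow> to_m (from_m M :: complex^'n^'n) = M"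
  by (rule eq_matI) (auto simp: from_m_def to_m_def)
lemma from_to_v[simp]: "from_v (to_v x) = (x :: complex^'n)"
  by (simp add: from_v_def to_v_def Finite_Cartesian_Product.vec_eq_iff)
lemma to_from_v[simp]: "v \<in> carrier_vec CARD('n) \<Longrightarrow> to_v (from_v v :: complex^'n) = v"
  by (rule eq_vecI) (auto simp: from_v_def to_v_def)

lemma to_v_0[simp]: "to_v (0 :: complex^'n) = 0\<^sub>v CARD('n)"
  by (rule eq_vecI) (auto simp: to_v_def)
lemma to_v_eq0: "(to_v (x :: complex^'n) = 0\<^sub>v CARD('n)) = (x = 0)"
  by (metis from_to_v to_v_0)

lemma to_m_char: "char_matrix (to_m A) ev = to_m (A - Finite_Cartesian_Product.mat ev :: complex^'n^'n)"
  by (rule eq_matI) (auto simp: to_m_def char_matrix_def Finite_Cartesian_Product.mat_def dest: ix_inj)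

lemma to_m_one: "to_m (Finite_Cartesian_Product.mat 1 :: complex^'n^'n) = 1\<^sub>m CARD('n)"
  by (rule eq_matI) (auto simp: to_m_def Finite_Cartesian_Product.mat_def dest: ix_inj)

lemma from_m_mult: "M \<in> carrier_mat CARD('n) CARD('n) \<Longrightarrow> N \<in> carrier_mat CARD('n) CARD('n) \<Longrightarrow>
   (from_m (M * N) :: complex^'n^'n) = from_m M ** from_m N"
  by (metis from_to_m to_from_m to_m_mult)

lemma from_m_one: "(from_m (1\<^sub>m CARD('n)) :: complex^'n^'n) = Finite_Cartesian_Product.mat 1"
  by (metis from_to_m to_m_one)



lemma mat_pow_0[simp]: "mat_pow A 0 = Finite_Cartesian_Product.mat 1" by (simp add: mat_pow_def)
lemma mat_pow_Suc: "mat_pow A (Suc k) = A ** mat_pow A k" by (simp add: mat_pow_def)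

definition l1m :: "complex^'n^'n \<Rightarrow> real" where
  "l1m X = (\<Sum>i\<in>UNIV. \<Sum>j\<in>UNIV. cmod (X $ i $ j))"

lemma norm_le_l1_vec: "norm (x :: 'a::real_normed_vector^'n) \<le> (\<Sum>i\<in>UNIV. norm (x $ i))"
  unfolding norm_vec_def by (rule L2_set_le_sum) simp

lemma norm_le_l1m: "norm X \<le> l1m X"
proof -
  have "norm X \<le> (\<Sum>i\<in>UNIV. norm (X $ i))" by (rule norm_le_l1_vec)
  also have "\<dots> \<le> l1m X" unfolding l1m_def by (intro sum_mono norm_le_l1_vec)
  finally show ?thesis .
qed

lemma l1m_nonneg: "0 \<le> l1m X" unfolding l1m_def by (intro sum_nonneg) auto

lemma l1m_mult: "l1m (X ** Y) \<le> l1m X * l1m Y"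
proof -
  have "l1m (X ** Y) \<le> (\<Sum>i\<in>UNIV. \<Sum>j\<in>UNIV. \<Sum>k\<in>UNIV. cmod (X$i$k) * cmod (Y$k$j))"
    unfolding l1m_def matrix_matrix_mult_def
    by (intro sum_mono) (auto intro!: order.trans[OF norm_sum] simp: norm_mult)
  also have "\<dots> = (\<Sum>i\<in>UNIV. \<Sum>k\<in>UNIV. cmod (X$i$k) * (\<Sum>j\<in>UNIV. cmod (Y$k$j)))"
    by (rule sum.cong[OF refl], subst sum.swap, simp add: sum_distrib_left)
  also have "\<dots> \<le> (\<Sum>i\<in>UNIV. \<Sum>k\<in>UNIV. cmod (X$i$k) * l1m Y)"
  proof -
    have "\<And>k. (\<Sum>j\<in>UNIV. cmod (Y$k$j)) \<le> l1m Y"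
      unfolding l1m_def by (rule member_le_sum[of _ UNIV "\<lambda>k. \<Sum>j\<in>UNIV. cmod (Y$k$j)"]) (auto intro: sum_nonneg)
    thus ?thesis by (intro sum_mono mult_left_mono) auto
  qed
  also have "\<dots> = l1m X * l1m Y" unfolding l1m_def by (simp add: sum_distrib_right)
  finally show ?thesis .
qed

lemma l1m_pow: "l1m (mat_pow (A::complex^'n^'n) k) \<le> l1m (Finite_Cartesian_Product.mat 1 :: complex^'n^'n) * l1m A ^ k"
proof (induct k)
  case 0 then show ?case by simp
next
  case (Suc k)
  have "l1m (mat_pow A (Suc k)) \<le> l1m A * l1m (mat_pow A k)"
    unfolding mat_pow_Suc by (rule l1m_mult)
  also have "\<dots> \<le> l1m A * (l1m (Finite_Cartesian_Product.mat 1 :: complex^'n^'n) * l1m A ^ k)"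
    by (intro mult_left_mono Suc l1m_nonneg)
  finally show ?case by (simp add: algebra_simps)
qed

lemma mexp_summable: "summable (\<lambda>k. (1 / fact k) *\<^sub>R mat_pow (A :: complex^'n^'n) k)"
proof (rule summable_comparison_test)
  let ?c = "l1m (Finite_Cartesian_Product.mat 1 :: complex^'n^'n)"
  show "\<exists>N. \<forall>n\<ge>N. norm ((1 / fact n) *\<^sub>R mat_pow A n) \<le> ?c * (inverse (fact n) * l1m A ^ n)"
    apply (rule exI[of _ 0], intro allI impI)
    using order.trans[OF norm_le_l1m l1m_pow, of A]
    by (simp add: divide_simps)
  show "summable (\<lambda>n. ?c * (inverse (fact n) * l1m A ^ n))"
    by (intro summable_mult summable_exp)
qed

lemma bl_entry: "bounded_linear (\<lambda>X::complex^'n^'n. X $ i $ j)"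
  using bounded_linear_compose[OF bounded_linear_vec_nth bounded_linear_vec_nth] by blast

lemma mexp_entry_sums: "(\<lambda>k. mat_pow A k $ i $ j / fact k) sums (mexp A $ i $ j)"
proof -
  have "(\<lambda>k. ((1 / fact k) *\<^sub>R mat_pow A k) $ i $ j) sums (mexp A $ i $ j)"
    unfolding mexp_def using bounded_linear.sums[OF bl_entry summable_sums[OF mexp_summable]] .
  thus ?thesis by (simp only: vector_scaleR_component) (simp add: scaleR_conv_of_real)
qed

definition dmat :: "('n \<Rightarrow> complex) \<Rightarrow> complex^'n^'n" where
  "dmat d = (\<chi> i j. if i = j then d i else 0)"

lemma dmat_one: "dmat (\<lambda>a. 1) = Finite_Cartesian_Product.mat 1"
  by (simp add: dmat_def Finite_Cartesian_Product.mat_def)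

lemma dmat_mult: "dmat (d::'n::finite \<Rightarrow> complex) ** dmat e = dmat (\<lambda>a. d a * e a)"
proof -
  have "\<And>i j. (\<Sum>k\<in>UNIV. (if i = k then d i else 0) * (if k = j then e k else 0)) = (if i = j then d i * e i else 0)"
  proof -
    fix i j :: 'n
    have "(\<Sum>k\<in>UNIV. (if i = k then d i else 0) * (if k = j then e k else 0)) = (\<Sum>k\<in>UNIV. if k = i then (if i = j then d i * e i else 0) else 0)"
      by (rule sum.cong) auto
    thus "?thesis i j" by simp
  qed
  thus ?thesis by (simp add: dmat_def matrix_matrix_mult_def Finite_Cartesian_Product.vec_eq_iff)
qed

lemma conj_entry: "(P ** dmat e ** Q) $ i $ j = (\<Sum>a\<in>UNIV. P$i$a * e a * Q$a$j)"
  by (simp add: dmat_def matrix_matrix_mult_def if_distrib sum_distrib_right cong: if_cong)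

lemma pow_conj:
  assumes "P ** Q = Finite_Cartesian_Product.mat 1" "Q ** P = Finite_Cartesian_Product.mat 1"
  shows "mat_pow (P ** dmat d ** Q) k = P ** dmat (\<lambda>a. d a ^ k) ** Q"
proof (induct k)
  case 0 then show ?case using assms by (simp add: dmat_one)
next
  case (Suc k)
  have "mat_pow (P ** dmat d ** Q) (Suc k) = (P ** dmat d ** Q) ** (P ** dmat (\<lambda>a. d a ^ k) ** Q)"
    by (simp add: mat_pow_Suc Suc)
  also have "\<dots> = P ** dmat d ** (Q ** P) ** dmat (\<lambda>a. d a ^ k) ** Q"
    by (simp add: matrix_mul_assoc)
  also have "\<dots> = P ** (dmat d ** dmat (\<lambda>a. d a ^ k)) ** Q"
    using assms by (simp add: matrix_mul_assoc)
  finally show ?case by (simp add: dmat_mult)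
qed

lemma mexp_conj_entry:
  assumes "P ** Q = Finite_Cartesian_Product.mat 1" "Q ** P = Finite_Cartesian_Product.mat 1"
  shows "mexp (P ** dmat d ** Q) $ i $ j = (\<Sum>a\<in>UNIV. P$i$a * exp (d a) * Q$a$j)"
proof -
  have "(\<lambda>k. mat_pow (P ** dmat d ** Q) k $ i $ j / fact k) sums (\<Sum>a\<in>UNIV. P$i$a * exp (d a) * Q$a$j)"
  proof -
    have "(\<lambda>k. \<Sum>a\<in>UNIV. (P$i$a * Q$a$j) * (d a ^ k / fact k)) sums (\<Sum>a\<in>UNIV. (P$i$a * Q$a$j) * exp (d a))"
    proof (rule sums_sum, rule sums_mult)
      fix a
      show "(\<lambda>k. d a ^ k / fact k) sums exp (d a)"
        using exp_converges[of "d a"] by (simp add: scaleR_conv_of_real divide_inverse mult.commute)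
    qed
    thus ?thesis unfolding pow_conj[OF assms] conj_entry
      by (simp add: sum_divide_distrib algebra_simps)
  qed
  from sums_unique2[OF mexp_entry_sums this] show ?thesis .
qed

lemma scale_conj: "t *\<^sub>R (P ** dmat d ** Q) = P ** dmat (\<lambda>a. of_real t * d a) ** Q"
  by (simp add: Finite_Cartesian_Product.vec_eq_iff conj_entry) (simp add: scaleR_conv_of_real sum_distrib_left algebra_simps)

lemma unitary_entry_bound:
  assumes "U \<in> unitary_group" shows "cmod (U$i$j) \<le> 1"
proof -
  have "(conj_transpose U ** U) $ j $ j = 1" using assms by (simp add: unitary_group_def Finite_Cartesian_Product.mat_def)
  hence "(\<Sum>k\<in>UNIV. cnj (U$k$j) * U$k$j) = 1"
    by (simp add: conj_transpose_def matrix_matrix_mult_def)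
  moreover have "\<And>k. cnj (U$k$j) * U$k$j = of_real ((cmod (U$k$j))\<^sup>2)"
    by (metis complex_norm_square mult.commute of_real_power)
  ultimately have "of_real (\<Sum>k\<in>UNIV. (cmod (U$k$j))\<^sup>2) = (1::complex)" by simp
  hence s: "(\<Sum>k\<in>UNIV. (cmod (U$k$j))\<^sup>2) = 1" using of_real_eq_1_iff by blast
  have "(cmod (U$i$j))\<^sup>2 \<le> (\<Sum>k\<in>UNIV. (cmod (U$k$j))\<^sup>2)"
    by (rule member_le_sum) auto
  with s have "(cmod (U$i$j))\<^sup>2 \<le> 1\<^sup>2" by simp
  thus ?thesis by (rule power2_le_imp_le) simp
qed

lemma mv_bound:
  assumes "\<And>j. cmod (U$i$j) \<le> 1" shows "cmod ((U *v y)$i) \<le> (\<Sum>j\<in>UNIV. cmod (y$j))"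
proof -
  have "cmod ((U *v y)$i) \<le> (\<Sum>j\<in>UNIV. cmod (U$i$j * y$j))"
    unfolding matrix_vector_mult_def by (simp add: norm_sum)
  also have "\<dots> \<le> (\<Sum>j\<in>UNIV. cmod (y$j))"
    by (intro sum_mono) (simp add: norm_mult mult_left_le_one_le assms)
  finally show ?thesis .
qed

lemma scaleR_mm: "(t *\<^sub>R A) ** (s *\<^sub>R B) = (t * s) *\<^sub>R (A ** (B::complex^'n^'n))"
  by (simp add: Finite_Cartesian_Product.vec_eq_iff matrix_matrix_mult_def scaleR_sum_right mult.commute)

lemma mat_pow_scaleR: "mat_pow (t *\<^sub>R A) k = (t ^ k) *\<^sub>R mat_pow (A::complex^'n^'n) k"
proof (induct k)
  case 0 then show ?case by simp
next
  case (Suc k)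
  have "mat_pow (t *\<^sub>R A) (Suc k) = (t *\<^sub>R A) ** ((t ^ k) *\<^sub>R mat_pow A k)"
    by (simp add: mat_pow_Suc Suc)
  also have "\<dots> = (t ^ Suc k) *\<^sub>R mat_pow A (Suc k)"
    by (simp add: scaleR_mm mat_pow_Suc)
  finally show ?case .
qed

lemma mexp_mv_sums: "(\<lambda>k. (mat_pow M k *v x) $ i / fact k) sums ((mexp M *v x) $ i)"
proof -
  have "(\<lambda>k. \<Sum>j\<in>UNIV. (mat_pow M k $ i $ j / fact k) * x$j) sums (\<Sum>j\<in>UNIV. mexp M $ i $ j * x$j)"
    by (intro sums_sum sums_mult2 mexp_entry_sums)
  thus ?thesis by (simp add: matrix_vector_mult_def sum_divide_distrib)
qed

lemma ser2: "(\<lambda>k. of_nat k * ev ^ (k - 1) * t ^ k / fact k) sums (t * exp (t * ev :: complex))"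
proof -
  have "(\<lambda>k. t * ((t * ev) ^ k / fact k)) sums (t * exp (t * ev))"
    by (rule sums_mult) (use exp_converges[of "t*ev"] in \<open>simp add: scaleR_conv_of_real divide_inverse mult.commute\<close>)
  moreover have "\<And>k. t * ((t * ev) ^ k / fact k) = of_nat (Suc k) * ev ^ (Suc k - 1) * t ^ (Suc k) / fact (Suc k)"
    by (simp add: field_simps power_mult_distrib del: of_nat_Suc)
  ultimately have "(\<lambda>k. of_nat (Suc k) * ev ^ (Suc k - 1) * t ^ (Suc k) / fact (Suc k)) sums (t * exp (t * ev))"
    by simp
  thus ?thesis by (subst (asm) sums_Suc_iff) simp
qed

lemma gen_eig:
  assumes pw: "\<And>k. mat_pow A k *v x = ev ^ k *s x + (of_nat k * ev ^ (k - 1)) *s w"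
  shows "(mexp (t *\<^sub>R A) *v x) $ i = exp (of_real t * ev) * (x$i + of_real t * w$i)"
proof -
  have "(\<lambda>k. x$i * ((of_real t * ev) ^ k / fact k) + w$i * (of_nat k * ev ^ (k - 1) * (of_real t) ^ k / fact k))
     sums (x$i * exp (of_real t * ev) + w$i * (of_real t * exp (of_real t * ev)))"
    by (intro sums_add sums_mult ser2) (use exp_converges[of "of_real t * ev"] in \<open>simp add: scaleR_conv_of_real divide_inverse mult.commute\<close>)
  moreover have "\<And>k. (mat_pow (t *\<^sub>R A) k *v x) $ i / fact k = x$i * ((of_real t * ev) ^ k / fact k) + w$i * (of_nat k * ev ^ (k - 1) * (of_real t) ^ k / fact k)"
  proof -
    fix k
    have "(mat_pow (t *\<^sub>R A) k *v x) = (t ^ k) *\<^sub>R (mat_pow A k *v x)"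
      by (simp add: mat_pow_scaleR Finite_Cartesian_Product.vec_eq_iff matrix_vector_mult_def scaleR_sum_right)
    hence "(mat_pow (t *\<^sub>R A) k *v x) $ i = (t ^ k) *\<^sub>R ((mat_pow A k *v x) $ i)" by simp
    also have "\<dots> = (t ^ k) *\<^sub>R (ev ^ k * x$i + (of_nat k * ev ^ (k - 1)) * w$i)" by (simp add: pw)
    finally show "?thesis k" by (simp add: scaleR_conv_of_real field_simps power_mult_distrib)
  qed
  ultimately have "(\<lambda>k. (mat_pow (t *\<^sub>R A) k *v x) $ i / fact k) sums (x$i * exp (of_real t * ev) + w$i * (of_real t * exp (of_real t * ev)))"
    by simp
  from sums_unique2[OF mexp_mv_sums this] show ?thesis by (simp add: algebra_simps)
qed

lemma mat_mv: "(Finite_Cartesian_Product.mat c :: complex^'n^'n) *v y = c *s y"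
proof -
  have "\<And>i. (\<Sum>j\<in>UNIV. (if i = j then c else 0) * y $ j) = c * y $ i"
  proof -
    fix i :: 'n
    have "(\<Sum>j\<in>UNIV. (if i = j then c else 0) * y $ j) = (\<Sum>j\<in>UNIV. if j = i then c * y $ i else 0)"
      by (rule sum.cong) auto
    thus "?thesis i" by simp
  qed
  thus ?thesis by (simp add: Finite_Cartesian_Product.vec_eq_iff matrix_vector_mult_def Finite_Cartesian_Product.mat_def)
qed

lemma mv_lin: "A *v (a *s x + b *s y) = a *s (A *v x) + b *s (A *v (y::complex^'n))"
  by (simp add: Finite_Cartesian_Product.vec_eq_iff matrix_vector_mult_def sum_distrib_left sum.distrib algebra_simps)

lemma mv_smult: "A *v (a *s x) = a *s (A *v (x::complex^'n))"
  by (simp add: Finite_Cartesian_Product.vec_eq_iff matrix_vector_mult_def sum_distrib_left algebra_simps)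

lemma no_jordan:
  fixes A :: "complex^'n^'n"
  assumes U: "\<And>t::real. mexp (t *\<^sub>R A) \<in> unitary_group"
  and H: "(A - Finite_Cartesian_Product.mat ev) *v ((A - Finite_Cartesian_Product.mat ev) *v x) = 0"
  shows "(A - Finite_Cartesian_Product.mat ev) *v x = 0"
proof (rule ccontr)
  define w where "w = (A - Finite_Cartesian_Product.mat ev) *v x"
  assume "(A - Finite_Cartesian_Product.mat ev) *v x \<noteq> 0"
  hence "w \<noteq> 0" by (simp add: w_def)
  then obtain i where wi: "w $ i \<noteq> 0" by (auto simp: Finite_Cartesian_Product.vec_eq_iff)
  have diff: "\<And>y. (A - Finite_Cartesian_Product.mat ev) *v y = A *v y - ev *s y"
    by (simp add: matrix_vector_mult_diff_rdistrib mat_mv)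
  have Aw: "A *v w = ev *s w" using H diff[of w] by (simp add: w_def)
  have Ax: "A *v x = ev *s x + w" using diff[of x] by (simp add: w_def)
  have pw: "\<And>k. mat_pow A k *v x = ev ^ k *s x + (of_nat k * ev ^ (k - 1)) *s w"
  proof -
    fix k show "?thesis k"
    proof (induct k)
      case 0 then show ?case by (simp add: matrix_vector_mul_lid)
    next
      case (Suc k)
      have "mat_pow A (Suc k) *v x = A *v (mat_pow A k *v x)"
        by (simp add: mat_pow_Suc matrix_vector_mul_assoc)
      also have "\<dots> = ev ^ k *s (ev *s x + w) + (of_nat k * ev ^ (k - 1)) *s (ev *s w)"
        by (simp add: Suc mv_lin Ax Aw)
      also have "\<dots> = ev ^ Suc k *s x + (of_nat (Suc k) * ev ^ (Suc k - 1)) *s w"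
        by (cases k) (simp_all add: Finite_Cartesian_Product.vec_eq_iff algebra_simps)
      finally show ?case .
    qed
  qed
  have pw2: "\<And>k. mat_pow A k *v w = ev ^ k *s w + (of_nat k * ev ^ (k - 1)) *s 0"
  proof -
    fix k show "?thesis k"
    proof (induct k)
      case 0 then show ?case by (simp add: matrix_vector_mul_lid)
    next
      case (Suc k)
      have "mat_pow A (Suc k) *v w = A *v (mat_pow A k *v w)"
        by (simp add: mat_pow_Suc matrix_vector_mul_assoc)
      also have "\<dots> = A *v (ev ^ k *s w)" using Suc by simp
      also have "\<dots> = ev ^ k *s (ev *s w)" by (simp add: Aw mv_smult)
      also have "\<dots> = ev ^ Suc k *s w" by (simp add: Finite_Cartesian_Product.vec_eq_iff algebra_simps)
      finally show ?case by simp
    qed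
  qed
  define W where "W = (\<Sum>j\<in>UNIV. cmod (w$j))"
  define X where "X = (\<Sum>j\<in>UNIV. cmod (x$j))"
  let ?e = "\<lambda>t::real. exp (of_real t * ev)"
  have bnd: "\<And>t y. cmod ((mexp (t *\<^sub>R A) *v y) $ i) \<le> (\<Sum>j\<in>UNIV. cmod (y$j))"
    by (rule mv_bound) (rule unitary_entry_bound[OF U])
  have ew: "cmod (?e t) * cmod (w$i) \<le> W" for t
  proof -
    have e: "(mexp (t *\<^sub>R A) *v w)$i = ?e t * w$i" using gen_eig[OF pw2, of t i] by simp
    have "cmod (?e t * w$i) \<le> W" using bnd[of t w] unfolding e W_def .
    thus ?thesis by (simp only: norm_mult)
  qed
  have ex: "cmod (?e t) * cmod (x$i + of_real t * w$i) \<le> X" for t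
  proof -
    have e: "(mexp (t *\<^sub>R A) *v x)$i = ?e t * (x$i + of_real t * w$i)" using gen_eig[OF pw, of t i] by simp
    have "cmod (?e t * (x$i + of_real t * w$i)) \<le> X" using bnd[of t x] unfolding e X_def .
    thus ?thesis by (simp only: norm_mult)
  qed
  have Wpos: "0 < W"
  proof -
    have h: "cmod (w$i) \<le> W" unfolding W_def by (rule member_le_sum) auto
    have "0 < cmod (w$i)" using wi by simp
    thus ?thesis using h by linarith
  qed
  have low: "\<And>t. cmod (w$i) \<le> cmod (?e t) * W"
  proof -
    fix t :: real
    have "?e t * ?e (-t) = 1" by (simp add: exp_add[symmetric])
    hence "cmod (w$i) = cmod (?e t) * (cmod (?e (-t)) * cmod (w$i))"
      by (metis mult.assoc mult_1 norm_mult norm_one)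
    also have "\<dots> \<le> cmod (?e t) * W" by (intro mult_left_mono ew) simp
    finally show "?thesis t" .
  qed
  have key: "\<And>t. cmod (w$i) * cmod (x$i + of_real t * w$i) \<le> W * X"
  proof -
    fix t :: real
    have "cmod (w$i) * cmod (x$i + of_real t * w$i) \<le> (cmod (?e t) * W) * cmod (x$i + of_real t * w$i)"
      by (intro mult_right_mono low) simp
    also have "\<dots> = W * (cmod (?e t) * cmod (x$i + of_real t * w$i))" by simp
    also have "\<dots> \<le> W * X" by (intro mult_left_mono ex) (use Wpos in simp)
    finally show "?thesis t" .
  qed
  define c where "c = cmod (w$i)"
  have cpos: "0 < c" using wi by (simp add: c_def)
  define t where "t = (W * X / c + cmod (x$i) + 1) / c"
  have "t * c = W * X / c + cmod (x$i) + 1" using cpos by (simp add: t_def)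
  moreover have "cmod (of_real t * w$i) = t * c"
  proof -
    have Xnn: "0 \<le> X" unfolding X_def by (intro sum_nonneg) simp
    have "0 \<le> W * X / c" using Wpos Xnn cpos by simp
    hence "0 \<le> W * X / c + cmod (x$i) + 1" by simp
    hence "t \<ge> 0" using cpos unfolding t_def by simp
    thus ?thesis by (simp add: norm_mult c_def)
  qed
  moreover have "cmod (of_real t * w$i) - cmod (x$i) \<le> cmod (x$i + of_real t * w$i)"
    by (metis add.commute norm_diff_ineq)
  ultimately have "W * X / c + 1 \<le> cmod (x$i + of_real t * w$i)" by linarith
  hence "c * (W * X / c + 1) \<le> c * cmod (x$i + of_real t * w$i)"
    using cpos by (intro mult_left_mono) auto
  moreover have "c * (W * X / c + 1) = W * X + c" using cpos by (simp add: field_simps)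
  ultimately have "W * X + c \<le> c * cmod (x$i + of_real t * w$i)" by simp
  thus False using key[of t] cpos unfolding c_def by linarith
qed




abbreviation "fmat \<equiv> Finite_Cartesian_Product.mat"

lemma diagonalize:
  fixes A :: "complex^'n^'n"
  assumes U: "\<And>t::real. mexp (t *\<^sub>R A) \<in> unitary_group"
  shows "\<exists>P Q (d::'n \<Rightarrow> complex). P ** Q = fmat 1 \<and> Q ** P = fmat 1 \<and> A = P ** dmat d ** Q"
proof -
  let ?N = "CARD('n)"
  have H: "\<And>ev v. v \<in> carrier_vec ?N \<Longrightarrow> char_matrix (to_m A) ev *\<^sub>v (char_matrix (to_m A) ev *\<^sub>v v) = 0\<^sub>v ?N
            \<Longrightarrow> char_matrix (to_m A) ev *\<^sub>v v = 0\<^sub>v ?N"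
  proof -
    fix ev v assume v: "v \<in> carrier_vec ?N"
      and h: "char_matrix (to_m A) ev *\<^sub>v (char_matrix (to_m A) ev *\<^sub>v v) = 0\<^sub>v ?N"
    define y :: "complex^'n" where "y = from_v v"
    have vy: "v = to_v y" using v by (simp add: y_def)
    let ?M = "A - fmat ev"
    have "to_v (?M *v (?M *v y)) = 0\<^sub>v ?N" using h unfolding vy to_m_char to_m_mv .
    hence "?M *v (?M *v y) = 0" by (simp add: to_v_eq0)
    hence "?M *v y = 0" by (rule no_jordan[OF U])
    thus "char_matrix (to_m A) ev *\<^sub>v v = 0\<^sub>v ?N" unfolding vy to_m_char to_m_mv by simp
  qed
  from jnf_diag[OF to_m_carrier H] obtain P Q D where
    PQD: "P \<in> carrier_mat ?N ?N" "Q \<in> carrier_mat ?N ?N" "D \<in> carrier_mat ?N ?N"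
      "P * Q = 1\<^sub>m ?N" "Q * P = 1\<^sub>m ?N" "to_m A = P * D * Q"
    and dg: "\<forall>i<?N. \<forall>j<?N. i \<noteq> j \<longrightarrow> D $$ (i,j) = 0" by blast
  define P' :: "complex^'n^'n" where "P' = from_m P"
  define Q' :: "complex^'n^'n" where "Q' = from_m Q"
  define D' :: "complex^'n^'n" where "D' = from_m D"
  have "A = from_m (to_m A)" by simp
  also have "\<dots> = P' ** D' ** Q'" unfolding PQD(6) P'_def Q'_def D'_def
    using PQD by (simp add: from_m_mult matrix_mul_assoc)
  finally have A: "A = P' ** D' ** Q'" .
  have PQ: "P' ** Q' = fmat 1" unfolding P'_def Q'_def
    using PQD by (simp add: from_m_mult[symmetric] from_m_one)
  have QP: "Q' ** P' = fmat 1" unfolding P'_def Q'_def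
    using PQD by (simp add: from_m_mult[symmetric] from_m_one)
  have "D' = dmat (\<lambda>a. D $$ (jx a, jx a))"
    unfolding D'_def dmat_def from_m_def Finite_Cartesian_Product.vec_eq_iff using dg by auto
  with A have "A = P' ** dmat (\<lambda>a. D $$ (jx a, jx a)) ** Q'" by simp
  thus ?thesis using PQ QP by (intro exI[of _ P'] exI[of _ Q'] exI[of _ "\<lambda>a. D $$ (jx a, jx a)"]) simp
qed

lemma mexp_conj:
  assumes "P ** Q = fmat 1" "Q ** P = fmat 1"
  shows "mexp (P ** dmat d ** Q) = P ** dmat (\<lambda>a. exp (d a)) ** (Q :: complex^'n^'n)"
  by (simp add: Finite_Cartesian_Product.vec_eq_iff mexp_conj_entry[OF assms] conj_entry)

lemma dmat_left: "(dmat e ** R) $ a $ b = e a * R $ a $ b"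
proof -
  have "(\<Sum>k\<in>UNIV. (if a = k then e a else 0) * R $ k $ b) = (\<Sum>k\<in>UNIV. if k = a then e a * R $ a $ b else 0)"
    by (rule sum.cong) auto
  thus ?thesis by (simp add: dmat_def matrix_matrix_mult_def)
qed

lemma dmat_right: "(R ** dmat e) $ a $ b = R $ a $ b * e b"
proof -
  have "(\<Sum>k\<in>UNIV. R $ a $ k * (if k = b then e k else 0)) = (\<Sum>k\<in>UNIV. if k = b then R $ a $ b * e b else 0)"
    by (rule sum.cong) auto
  thus ?thesis by (simp add: dmat_def matrix_matrix_mult_def)
qed

lemma triple_entry: "(P ** M ** Q) $ a $ e = (\<Sum>c\<in>UNIV. \<Sum>c'\<in>UNIV. P$a$c * M$c$c' * Q$c'$(e::'n::finite) :: complex)"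
  apply (simp add: matrix_matrix_mult_def sum_distrib_right sum_distrib_left mult.assoc)
  apply (rule sum.swap)
  done

lemma sum_swap3: "(\<Sum>c\<in>(A::'a set). \<Sum>c'\<in>(B::'b set). \<Sum>k\<in>(K::int set). (f c c' k :: complex)) = (\<Sum>k\<in>K. \<Sum>c\<in>A. \<Sum>c'\<in>B. f c c' k)"
proof -
  have "(\<Sum>c\<in>A. \<Sum>c'\<in>B. \<Sum>k\<in>K. f c c' k) = (\<Sum>c\<in>A. \<Sum>k\<in>K. \<Sum>c'\<in>B. f c c' k)"
    by (rule sum.cong[OF refl]) (rule sum.swap)
  also have "\<dots> = (\<Sum>k\<in>K. \<Sum>c\<in>A. \<Sum>c'\<in>B. f c c' k)" by (rule sum.swap)
  finally show ?thesis .
qed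

theorem mainTheorem2:
  fixes G :: "(complex^'n^'n) set" and \<xi>1 \<xi>2 :: "complex^'n^'n"
  assumes "compact_connected_matrix_group G"
    and "\<xi>1 \<in> lie_algebra G" and "\<xi>2 \<in> lie_algebra G"
    and "mexp \<xi>1 = mexp \<xi>2"
  shows "polynomial_loop G (\<lambda>t. eta (- \<xi>1) t ** eta \<xi>2 t)"
proof -
  have GU: "G \<subseteq> unitary_group" and Gm: "\<And>A B. A \<in> G \<Longrightarrow> B \<in> G \<Longrightarrow> A ** B \<in> G"
    using assms(1) unfolding compact_connected_matrix_group_def by auto
  have L1: "\<And>t. mexp (t *\<^sub>R \<xi>1) \<in> G" and L2: "\<And>t. mexp (t *\<^sub>R \<xi>2) \<in> G"
    using assms(2,3) unfolding lie_algebra_def by auto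
  have mem: "\<forall>t. eta (- \<xi>1) t ** eta \<xi>2 t \<in> G"
  proof
    fix t :: real
    have a: "eta (- \<xi>1) t \<in> G" unfolding eta_def using L1[of "-t"] by simp
    have b: "eta \<xi>2 t \<in> G" unfolding eta_def using L2 by simp
    show "eta (- \<xi>1) t ** eta \<xi>2 t \<in> G" by (rule Gm[OF a b])
  qed
  obtain P1 Q1 :: "complex^'n^'n" and d1 :: "'n \<Rightarrow> complex" where D1: "P1 ** Q1 = fmat 1" "Q1 ** P1 = fmat 1" "\<xi>1 = P1 ** dmat d1 ** Q1"
  proof -
    have U1: "\<And>t. mexp (t *\<^sub>R \<xi>1) \<in> unitary_group" using L1 GU by blast
    from diagonalize[OF U1] show ?thesis using that by blast
  qed
  obtain P2 Q2 :: "complex^'n^'n" and d2 :: "'n \<Rightarrow> complex" where D2: "P2 ** Q2 = fmat 1" "Q2 ** P2 = fmat 1" "\<xi>2 = P2 ** dmat d2 ** Q2"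
  proof -
    have U2: "\<And>t. mexp (t *\<^sub>R \<xi>2) \<in> unitary_group" using L2 GU by blast
    from diagonalize[OF U2] show ?thesis using that by blast
  qed
  define R where "R = Q1 ** P2"
  have "P1 ** dmat (\<lambda>a. exp (d1 a)) ** Q1 = P2 ** dmat (\<lambda>a. exp (d2 a)) ** Q2"
    using assms(4) unfolding D1(3) D2(3) mexp_conj[OF D1(1,2)] mexp_conj[OF D2(1,2)] .
  hence "Q1 ** (P1 ** dmat (\<lambda>a. exp (d1 a)) ** Q1) ** P2 = Q1 ** (P2 ** dmat (\<lambda>a. exp (d2 a)) ** Q2) ** P2"
    by simp
  hence RE: "dmat (\<lambda>a. exp (d1 a)) ** R = R ** dmat (\<lambda>a. exp (d2 a))"
    unfolding R_def by (simp add: matrix_mul_assoc D1(2) D2(2))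
       (metis D1(2) D2(2) matrix_mul_assoc matrix_mul_lid matrix_mul_rid)
  have kex: "\<And>c c'. R$c$c' \<noteq> 0 \<Longrightarrow> \<exists>n::int. d2 c' - d1 c = of_real (2 * pi) * \<i> * of_int n"
  proof -
    fix c c' assume nz: "R$c$c' \<noteq> 0"
    have "exp (d1 c) * R$c$c' = R$c$c' * exp (d2 c')"
      using arg_cong[OF RE, of "\<lambda>M. M $ c $ c'"] by (simp add: dmat_left dmat_right)
    hence "exp (d2 c') = exp (d1 c)" using nz by simp
    hence "exp (d2 c' - d1 c) = 1" by (simp add: exp_diff)
    then obtain n :: int where "Re (d2 c' - d1 c) = 0" "Im (d2 c' - d1 c) = of_int (2 * n) * pi"
      unfolding exp_eq_1 by blast
    hence "d2 c' - d1 c = of_real (2 * pi) * \<i> * of_int n"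
      by (simp add: complex_eq_iff)
    thus "\<exists>n::int. d2 c' - d1 c = of_real (2 * pi) * \<i> * of_int n" ..
  qed
  define kk where "kk c c' = (if R$c$c' = 0 then 0 else (SOME n::int. d2 c' - d1 c = of_real (2 * pi) * \<i> * of_int n))" for c c'
  have kk: "\<And>c c'. R$c$c' \<noteq> 0 \<Longrightarrow> d2 c' - d1 c = of_real (2 * pi) * \<i> * of_int (kk c c')"
    unfolding kk_def using kex by (auto intro: someI_ex)
  define N where "N = nat (\<Sum>c\<in>UNIV. \<Sum>c'\<in>UNIV. \<bar>kk c c'\<bar>)"
  have kN: "\<And>c c'. kk c c' \<in> {- int N..int N}"
  proof -
    fix c c'
    have "\<bar>kk c c'\<bar> \<le> (\<Sum>c'\<in>UNIV. \<bar>kk c c'\<bar>)" by (rule member_le_sum) auto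
    also have "\<dots> \<le> (\<Sum>c\<in>UNIV. \<Sum>c'\<in>UNIV. \<bar>kk c c'\<bar>)" by (rule member_le_sum) (auto intro: sum_nonneg)
    finally show "kk c c' \<in> {- int N..int N}" unfolding N_def by auto
  qed
  define E where "E k t = exp (complex_of_real (2 * pi) * \<i> * complex_of_int k * complex_of_real t)" for k :: int and t :: real
  define cf where "cf k = (\<chi> a e. \<Sum>c\<in>UNIV. \<Sum>c'\<in>UNIV. if kk c c' = k then P1$a$c * R$c$c' * Q2$c'$e else 0)" for k
  have ent: "(eta (- \<xi>1) t ** eta \<xi>2 t) $ a $ e = (\<Sum>k\<in>{- int N..int N}. cf k $ a $ e * E k t)" for t a e
  proof -
    have e1: "eta (- \<xi>1) t = P1 ** dmat (\<lambda>x. exp (of_real (-t) * d1 x)) ** Q1"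
      unfolding eta_def D1(3) using scale_conj[of "-t" P1 d1 Q1] mexp_conj[OF D1(1,2)]
      by simp
    have e2: "eta \<xi>2 t = P2 ** dmat (\<lambda>x. exp (of_real t * d2 x)) ** Q2"
      unfolding eta_def D2(3) using scale_conj[of t P2 d2 Q2] mexp_conj[OF D2(1,2)]
      by simp
    define M where "M = dmat (\<lambda>x. exp (of_real (-t) * d1 x)) ** R ** dmat (\<lambda>x. exp (of_real t * d2 x))"
    have prod: "eta (- \<xi>1) t ** eta \<xi>2 t = P1 ** M ** Q2"
      unfolding e1 e2 M_def R_def by (simp add: matrix_mul_assoc)
    have Mc: "M $ c $ c' = R$c$c' * E (kk c c') t" for c c'
    proof -
      have "M $ c $ c' = exp (of_real (-t) * d1 c) * R$c$c' * exp (of_real t * d2 c')"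
        unfolding M_def by (simp add: dmat_left dmat_right)
      also have "\<dots> = R$c$c' * exp (of_real t * (d2 c' - d1 c))"
        by (simp add: exp_add[symmetric] algebra_simps)
      also have "\<dots> = R$c$c' * E (kk c c') t"
        by (cases "R$c$c' = 0") (simp_all add: kk E_def algebra_simps)
      finally show ?thesis .
    qed
    have "(eta (- \<xi>1) t ** eta \<xi>2 t) $ a $ e = (\<Sum>c\<in>UNIV. \<Sum>c'\<in>UNIV. P1$a$c * R$c$c' * Q2$c'$e * E (kk c c') t)"
      unfolding prod triple_entry Mc by (simp add: algebra_simps)
    also have "\<dots> = (\<Sum>c\<in>UNIV. \<Sum>c'\<in>UNIV. \<Sum>k\<in>{- int N..int N}. if kk c c' = k then P1$a$c * R$c$c' * Q2$c'$e * E k t else 0)"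
    proof -
      have "\<And>c c'. (\<Sum>k\<in>{- int N..int N}. if kk c c' = k then P1$a$c * R$c$c' * Q2$c'$e * E k t else 0)
         = P1$a$c * R$c$c' * Q2$c'$e * E (kk c c') t"
        using kN by (simp add: sum.delta[OF finite_atLeastAtMost_int])
      thus ?thesis by simp
    qed
    also have "\<dots> = (\<Sum>k\<in>{- int N..int N}. \<Sum>c\<in>UNIV. \<Sum>c'\<in>UNIV. if kk c c' = k then P1$a$c * R$c$c' * Q2$c'$e * E k t else 0)"
      by (rule sum_swap3)
    also have "\<dots> = (\<Sum>k\<in>{- int N..int N}. cf k $ a $ e * E k t)"
    proof -
      have ifm: "\<And>P x y. (if P then x else 0) * y = (if P then x * y else (0::complex))" by simp
      show ?thesis unfolding cf_def by (simp add: sum_distrib_right ifm)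
    qed
    finally show ?thesis .
  qed
  show ?thesis unfolding polynomial_loop_def
    using mem ent unfolding E_def by blast
qed

end
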